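(* Let $\mathcal{F}_{-\frac12}=C^\infty_{\mathbb{C}}(S^{1|1})$ with even part $(\mathcal{F}_{-\frac12})_0=\{f_0(x)\}$ and odd part $(\mathcal{F}_{-\frac12})_1=\{\xi f_1(x)\}$, equipped with the operation (defined for pure-parity $f,g$ and extended bilinearly) $$(f,g)=-\tfrac12\,\overline{D}(f)\,g+\tfrac12\,(-1)^{\sigma(f)}\,f\,\overline{D}(g).$$ Then: (1) $(\mathcal{F}_{-\frac12})_1$ is closed under $(\,,\,)$ and is a commutative associative algebra; (2) setting $\rho_\psi v:=(\psi,v)$ for $\psi\in(\mathcal{F}_{-\frac12})_1$, $v\in(\mathcal{F}_{-\frac12})_0$, one has $\rho_\psi v\in(\mathcal{F}_{-\frac12})_0$ and $\rho_\varphi\circ\rho_\psi+\rho_\psi\circ\rho_\varphi=\rho_{(\varphi,\psi)}$ for all $\varphi,\psi\in(\mathcal{F}_{-\frac12})_1$; (3) the map $(\,,\,):(\mathcal{F}_{-\frac12})_0\otimes(\mathcal{F}_{-\frac12})_0\to(\mathcal{F}_{-\frac12})_1$ is antisymmetric and satisfies $\rho_\psi(v,w)=(\rho_\psi v,w)+(v,\rho_\psi w)$ for all $\psi\in(\mathcal{F}_{-\frac12})_1$, $v,w\in(\mathcal{F}_{-\frac12})_0$; (4) $(u,(v,w))+(v,(w,u))+(w,(u,v))=0$ for all $u,v,w\in(\mathcal{F}_{-\frac12})_0$.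
   Context: The supercircle $S^{1|1}$ has superalgebra of functions $C^\infty_{\mathbb{C}}(S^1)[\xi]$: elements $f=f_0(x)+\xi f_1(x)$ with $f_0,f_1$ smooth complex functions on $S^1$, $\xi$ odd with $\xi^2=0$, $x\xi=\xi x$. Parity: $\sigma(f_0)=0$, $\sigma(\xi f_1)=1$. $\partial_x$ acts coefficientwise, $\partial_\xi f=f_1$, and $\overline{D}=\partial_\xi-\xi\,\partial_x$. The operation above is the order-$\frac12$ supertransvectant $(f,g)=\mu\,\overline{D}(f)g-(-1)^{\sigma(f)}\lambda f\overline{D}(g)$ with $\lambda=\mu=-\frac12$. *)

theory Defs
  imports "HOL-Analysis.Analysis"
begin

text \<open>Functions on the circle S^1 = R / 2 pi Z are modelled as 2 pi-periodic
  smooth functions real => complex.  A superfunction f = f0(x) + xi f1(x) on S^{1|1}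
  is modelled as the pair (f0, f1).\<close>

type_synonym sfun = "(real \<Rightarrow> complex) \<times> (real \<Rightarrow> complex)"

definition vderiv :: "(real \<Rightarrow> complex) \<Rightarrow> real \<Rightarrow> complex" where
  "vderiv f = (\<lambda>x. vector_derivative f (at x))"

definition smooth_fun :: "(real \<Rightarrow> complex) \<Rightarrow> bool" where
  "smooth_fun f \<longleftrightarrow> (\<forall>n x. ((vderiv ^^ n) f) differentiable (at x))"

definition circle_fun :: "(real \<Rightarrow> complex) \<Rightarrow> bool" where
  "circle_fun f \<longleftrightarrow> smooth_fun f \<and> (\<forall>x. f (x + 2 * pi) = f x)"

definition F :: "sfun set" where
  "F = {(f0, f1). circle_fun f0 \<and> circle_fun f1}"

definition F0 :: "sfun set" where
  "F0 = {(f0, f1). circle_fun f0 \<and> f1 = (\<lambda>_. 0)}"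

definition F1 :: "sfun set" where
  "F1 = {(f0, f1). f0 = (\<lambda>_. 0) \<and> circle_fun f1}"

definition sadd :: "sfun \<Rightarrow> sfun \<Rightarrow> sfun" where
  "sadd f g = (\<lambda>x. fst f x + fst g x, \<lambda>x. snd f x + snd g x)"

definition sscale :: "complex \<Rightarrow> sfun \<Rightarrow> sfun" where
  "sscale c f = (\<lambda>x. c * fst f x, \<lambda>x. c * snd f x)"

text \<open>Product: (f0 + xi f1)(g0 + xi g1) = f0 g0 + xi (f0 g1 + f1 g0), as xi^2 = 0.\<close>
definition smult :: "sfun \<Rightarrow> sfun \<Rightarrow> sfun" where
  "smult f g = (\<lambda>x. fst f x * fst g x, \<lambda>x. fst f x * snd g x + snd f x * fst g x)"

text \<open>Dbar = d/dxi - xi d/dx, so Dbar (f0 + xi f1) = f1 - xi f0'.\<close>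
definition Dbar :: "sfun \<Rightarrow> sfun" where
  "Dbar f = (snd f, \<lambda>x. - vderiv (fst f) x)"

definition even_part :: "sfun \<Rightarrow> sfun" where
  "even_part f = (fst f, \<lambda>_. 0)"

definition odd_part :: "sfun \<Rightarrow> sfun" where
  "odd_part f = (\<lambda>_. 0, snd f)"

text \<open>The bracket (f,g) = -1/2 Dbar(f) g + 1/2 (-1)^sigma(f) f Dbar(g) on pure-parity f,
  extended bilinearly (linearity in g is automatic).\<close>
definition sbr :: "sfun \<Rightarrow> sfun \<Rightarrow> sfun" where
  "sbr f g =
     sadd
      (sadd (sscale (-1/2) (smult (Dbar (even_part f)) g))
            (sscale (1/2) (smult (even_part f) (Dbar g))))
      (sadd (sscale (-1/2) (smult (Dbar (odd_part f)) g))
            (sscale (-1/2) (smult (odd_part f) (Dbar g))))"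

definition rho :: "sfun \<Rightarrow> sfun \<Rightarrow> sfun" where
  "rho \<psi> v = sbr \<psi> v"

end

theory Submission
  imports Defs
begin

lemma smooth_diff: "smooth_fun f \<Longrightarrow> f differentiable at x"
  unfolding smooth_fun_def by (metis funpow_0)

lemma smooth_vderiv: "smooth_fun f \<Longrightarrow> smooth_fun (vderiv f)"
  unfolding smooth_fun_def by (metis funpow_Suc_right comp_apply)

lemma vderiv_add:
  "(\<And>x. f differentiable at x) \<Longrightarrow> (\<And>x. g differentiable at x) \<Longrightarrow>
   vderiv (\<lambda>x. f x + g x) = (\<lambda>x. vderiv f x + vderiv g x)"
  unfolding vderiv_def by (rule ext) simp

lemma vderiv_mult:
  "(\<And>x. f differentiable at x) \<Longrightarrow> (\<And>x. g differentiable at x) \<Longrightarrow>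
   vderiv (\<lambda>x. f x * g x) = (\<lambda>x. f x * vderiv g x + vderiv f x * g x)"
  unfolding vderiv_def by (rule ext) simp

lemma vderiv_const: "vderiv (\<lambda>x. c) = (\<lambda>x. 0)"
  unfolding vderiv_def by simp

lemma lin_w:
  "(\<forall>k<n. \<forall>x. ((vderiv ^^ k) f) differentiable at x) \<Longrightarrow>
   (\<forall>k<n. \<forall>x. ((vderiv ^^ k) g) differentiable at x) \<Longrightarrow>
   (vderiv ^^ n) (\<lambda>x. f x + g x) = (\<lambda>x. (vderiv ^^ n) f x + (vderiv ^^ n) g x)"
proof (induction n arbitrary: f g)
  case 0 then show ?case by simp
next
  case (Suc n)
  have d: "\<And>x. f differentiable at x" "\<And>x. g differentiable at x"
    using Suc.prems by (metis funpow_0 zero_less_Suc)+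
  have "(vderiv ^^ Suc n) (\<lambda>x. f x + g x) = (vderiv ^^ n) (\<lambda>x. vderiv f x + vderiv g x)"
    by (simp only: funpow_Suc_right comp_apply vderiv_add[OF d])
  also have "\<dots> = (\<lambda>x. (vderiv ^^ n) (vderiv f) x + (vderiv ^^ n) (vderiv g) x)"
  proof (rule Suc.IH)
    show "\<forall>k<n. \<forall>x. (vderiv ^^ k) (vderiv f) differentiable at x"
      using Suc.prems(1) by (metis Suc_mono funpow_Suc_right comp_apply)
    show "\<forall>k<n. \<forall>x. (vderiv ^^ k) (vderiv g) differentiable at x"
      using Suc.prems(2) by (metis Suc_mono funpow_Suc_right comp_apply)
  qed
  finally show ?case by (simp only: funpow_Suc_right comp_apply)
qed

lemma smooth_add: "smooth_fun f \<Longrightarrow> smooth_fun g \<Longrightarrow> smooth_fun (\<lambda>x. f x + g x)"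
  unfolding smooth_fun_def
  by (subst lin_w) auto

lemma smooth_mult_aux:
  "\<forall>f g. smooth_fun f \<longrightarrow> smooth_fun g \<longrightarrow>
     (\<forall>k\<le>n. \<forall>x. ((vderiv ^^ k) (\<lambda>x. f x * g x)) differentiable at x)"
proof (induction n)
  case 0
  then show ?case by (auto simp: smooth_diff)
next
  case (Suc n)
  show ?case
  proof (intro allI impI)
    fix f g k x assume f: "smooth_fun f" and g: "smooth_fun g" and k: "k \<le> Suc n"
    show "((vderiv ^^ k) (\<lambda>x. f x * g x)) differentiable at x"
    proof (cases "k \<le> n")
      case True then show ?thesis using Suc.IH f g by blast
    next
      case False
      then have kk: "k = Suc n" using k by simp
      have f': "smooth_fun (vderiv f)" and g': "smooth_fun (vderiv g)"
        using f g smooth_vderiv by auto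
      have A: "\<forall>j\<le>n. \<forall>x. ((vderiv ^^ j) (\<lambda>x. f x * vderiv g x)) differentiable at x"
        using Suc.IH f g' by blast
      have B: "\<forall>j\<le>n. \<forall>x. ((vderiv ^^ j) (\<lambda>x. vderiv f x * g x)) differentiable at x"
        using Suc.IH f' g by blast
      have "(vderiv ^^ k) (\<lambda>x. f x * g x) = (vderiv ^^ n) (\<lambda>x. f x * vderiv g x + vderiv f x * g x)"
        unfolding kk funpow_Suc_right comp_apply
        using vderiv_mult[of f g] f g smooth_diff by metis
      also have "\<dots> = (\<lambda>x. (vderiv ^^ n) (\<lambda>x. f x * vderiv g x) x + (vderiv ^^ n) (\<lambda>x. vderiv f x * g x) x)"
        by (rule lin_w) (use A B in auto)
      finally show ?thesis using A B by simp
    qed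
  qed
qed

lemma smooth_mult: "smooth_fun f \<Longrightarrow> smooth_fun g \<Longrightarrow> smooth_fun (\<lambda>x. f x * g x)"
  unfolding smooth_fun_def using smooth_mult_aux[unfolded smooth_fun_def] by blast

lemma const_iter: "\<exists>k. (vderiv ^^ n) (\<lambda>x. c) = (\<lambda>x. k)"
proof (induction n)
  case 0 then show ?case by auto
next
  case (Suc n)
  then obtain k where "(vderiv ^^ n) (\<lambda>x. c) = (\<lambda>x. k)" by blast
  then show ?case by (auto simp: vderiv_const)
qed

lemma smooth_const: "smooth_fun (\<lambda>x. c)"
  unfolding smooth_fun_def
proof (intro allI)
  fix n x
  obtain k where "(vderiv ^^ n) (\<lambda>x. c) = (\<lambda>x. k)" using const_iter by blast
  then show "(vderiv ^^ n) (\<lambda>x. c) differentiable at x" by simp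
qed

lemma smooth_cmult: "smooth_fun f \<Longrightarrow> smooth_fun (\<lambda>x. c * f x)"
  using smooth_mult[OF smooth_const] by blast

lemma periodic_vderiv:
  assumes p: "\<And>x. f (x + 2 * pi) = f x" and d: "\<And>x. f differentiable at x"
  shows "vderiv f (x + 2 * pi) = vderiv f x"
proof -
  have e: "f = f \<circ> (\<lambda>y. y + 2 * pi)" using p by (auto simp: fun_eq_iff)
  have h: "((\<lambda>y. y + 2 * pi) has_vector_derivative 1) (at x)"
    by (auto intro!: derivative_eq_intros)
  have "vector_derivative (f \<circ> (\<lambda>y. y + 2 * pi)) (at x)
        = vector_derivative (\<lambda>y. y + 2 * pi) (at x) *\<^sub>R vector_derivative f (at (x + 2 * pi))"
    by (rule vector_derivative_chain_at) (use h d in \<open>auto simp: differentiable_def has_vector_derivative_def\<close>)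
  also have "vector_derivative (\<lambda>y. y + 2 * pi) (at x) = 1"
    using h vector_derivative_at by blast
  finally show ?thesis unfolding vderiv_def using e by simp
qed

lemma circle_vderiv: "circle_fun f \<Longrightarrow> circle_fun (vderiv f)"
  unfolding circle_fun_def using smooth_vderiv periodic_vderiv smooth_diff by metis

lemma circle_mult: "circle_fun f \<Longrightarrow> circle_fun g \<Longrightarrow> circle_fun (\<lambda>x. f x * g x)"
  unfolding circle_fun_def using smooth_mult by auto

lemma circle_add: "circle_fun f \<Longrightarrow> circle_fun g \<Longrightarrow> circle_fun (\<lambda>x. f x + g x)"
  unfolding circle_fun_def using smooth_add by auto

lemma circle_cmult: "circle_fun f \<Longrightarrow> circle_fun (\<lambda>x. c * f x)"
  unfolding circle_fun_def using smooth_cmult by auto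

lemma circle_neg: "circle_fun f \<Longrightarrow> circle_fun (\<lambda>x. - f x)"
  using circle_cmult[of f "-1"] by simp

lemma circle_div: "circle_fun f \<Longrightarrow> circle_fun (\<lambda>x. f x / c)"
  using circle_cmult[of f "inverse c"] by (simp add: divide_inverse_commute)

lemma circle_sub: "circle_fun f \<Longrightarrow> circle_fun g \<Longrightarrow> circle_fun (\<lambda>x. f x - g x)"
  using circle_add[of f "\<lambda>x. - g x"] circle_neg[of g] by simp

lemma circle_diff_at: "circle_fun f \<Longrightarrow> f differentiable at x"
  unfolding circle_fun_def using smooth_diff by auto

lemma sbr_odd: "sbr (\<lambda>_. 0, a) g = (\<lambda>x. -(1/2) * (a x * fst g x), \<lambda>x. - (a x * snd g x))"
  by (simp add: sbr_def sadd_def sscale_def smult_def Dbar_def even_part_def odd_part_def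
      vderiv_const fun_eq_iff algebra_simps)

lemma sbr_even: "sbr (f, \<lambda>_. 0) g =
   (\<lambda>x. (1/2) * (f x * snd g x), \<lambda>x. (1/2) * (vderiv f x * fst g x - f x * vderiv (fst g) x))"
  by (simp add: sbr_def sadd_def sscale_def smult_def Dbar_def even_part_def odd_part_def
      vderiv_const fun_eq_iff algebra_simps)


lemma F1E: "\<phi> \<in> F1 \<Longrightarrow> (\<And>a. \<phi> = (\<lambda>_. 0, a) \<Longrightarrow> circle_fun a \<Longrightarrow> P) \<Longrightarrow> P"
  unfolding F1_def by auto

lemma F0E: "v \<in> F0 \<Longrightarrow> (\<And>f. v = (f, \<lambda>_. 0) \<Longrightarrow> circle_fun f \<Longrightarrow> P) \<Longrightarrow> P"
  unfolding F0_def by auto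

lemma p1: "circle_fun a \<Longrightarrow> circle_fun b \<Longrightarrow> sbr (\<lambda>_. 0, a) (\<lambda>_. 0, b) \<in> F1"
  unfolding F1_def sbr_odd by (simp add: circle_neg circle_mult)

lemma p2: "sbr (\<lambda>_. 0, a) (\<lambda>_. 0, b) = sbr (\<lambda>_. 0, b) (\<lambda>_. 0, a)"
  unfolding sbr_odd by (simp add: fun_eq_iff algebra_simps)

lemma p3: "sbr (sbr (\<lambda>_. 0, a) (\<lambda>_. 0, b)) (\<lambda>_. 0, c) = sbr (\<lambda>_. 0, a) (sbr (\<lambda>_. 0, b) (\<lambda>_. 0, c))"
proof -
  have e: "sbr (\<lambda>_. 0, a) (\<lambda>_. 0, b) = (\<lambda>_. 0, \<lambda>x. - (a x * b x))"
    unfolding sbr_odd by (simp add: fun_eq_iff)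
  have e2: "sbr (\<lambda>_. 0, b) (\<lambda>_. 0, c) = (\<lambda>_. 0, \<lambda>x. - (b x * c x))"
    unfolding sbr_odd by (simp add: fun_eq_iff)
  show ?thesis by (simp add: e e2 sbr_odd fun_eq_iff algebra_simps)
qed

lemma p4: "circle_fun b \<Longrightarrow> circle_fun f \<Longrightarrow> rho (\<lambda>_. 0, b) (f, \<lambda>_. 0) \<in> F0"
  unfolding F0_def rho_def sbr_odd by (simp add: circle_cmult circle_mult circle_neg circle_div)

lemma p5: "sadd (rho (\<lambda>_. 0, a) (rho (\<lambda>_. 0, b) (f, \<lambda>_. 0))) (rho (\<lambda>_. 0, b) (rho (\<lambda>_. 0, a) (f, \<lambda>_. 0)))
   = rho (sbr (\<lambda>_. 0, a) (\<lambda>_. 0, b)) (f, \<lambda>_. 0)"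
proof -
  have e: "sbr (\<lambda>_. 0, a) (\<lambda>_. 0, b) = (\<lambda>_. 0, \<lambda>x. - (a x * b x))"
    unfolding sbr_odd by (simp add: fun_eq_iff)
  show ?thesis by (simp add: e rho_def sbr_odd sadd_def fun_eq_iff algebra_simps)
qed

lemma p6: "circle_fun f \<Longrightarrow> circle_fun g \<Longrightarrow> sbr (f, \<lambda>_. 0) (g, \<lambda>_. 0) \<in> F1"
  unfolding F1_def sbr_even
  by (simp add: circle_cmult circle_sub circle_mult circle_vderiv circle_div)

lemma p7: "sbr (f, \<lambda>_. 0) (g, \<lambda>_. 0) = sscale (-1) (sbr (g, \<lambda>_. 0) (f, \<lambda>_. 0))"
  unfolding sbr_even sscale_def by (simp add: fun_eq_iff algebra_simps)

lemma p8:
  assumes b: "circle_fun b" and f: "circle_fun f" and g: "circle_fun g"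
  shows "rho (\<lambda>_. 0, b) (sbr (f, \<lambda>_. 0) (g, \<lambda>_. 0))
     = sadd (sbr (rho (\<lambda>_. 0, b) (f, \<lambda>_. 0)) (g, \<lambda>_. 0)) (sbr (f, \<lambda>_. 0) (rho (\<lambda>_. 0, b) (g, \<lambda>_. 0)))"
proof -
  have db: "\<And>x. b differentiable at x" and df: "\<And>x. f differentiable at x"
    and dg: "\<And>x. g differentiable at x" using b f g circle_diff_at by auto
  have e1: "vderiv (\<lambda>x. -(1/2) * (b x * h x)) = (\<lambda>x. -(1/2) * (b x * vderiv h x + vderiv b x * h x))"
    if dh: "\<And>x. h differentiable at x" for h
  proof -
    have "vderiv (\<lambda>x. -(1/2) * (b x * h x)) = (\<lambda>x. (\<lambda>x. -(1/2::complex)) x * vderiv (\<lambda>x. b x * h x) x + vderiv (\<lambda>x. -(1/2)) x * (b x * h x))"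
      by (rule vderiv_mult) (use db dh in auto)
    also have "\<dots> = (\<lambda>x. -(1/2) * (b x * vderiv h x + vderiv b x * h x))"
      by (simp add: vderiv_mult[OF db dh] vderiv_const)
    finally show ?thesis .
  qed
  have r1: "rho (\<lambda>_. 0, b) (f, \<lambda>_. 0) = ((\<lambda>x. -(1/2) * (b x * f x)), \<lambda>_. 0)"
    unfolding rho_def sbr_odd by (simp add: fun_eq_iff)
  have r2: "rho (\<lambda>_. 0, b) (g, \<lambda>_. 0) = ((\<lambda>x. -(1/2) * (b x * g x)), \<lambda>_. 0)"
    unfolding rho_def sbr_odd by (simp add: fun_eq_iff)
  show ?thesis
    unfolding r1 r2 unfolding rho_def sbr_even sbr_odd sadd_def e1[OF df] e1[OF dg] fst_conv snd_conv
    by (simp add: fun_eq_iff algebra_simps)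
qed

lemma p9:
  "sadd (sadd (sbr (p, \<lambda>_. 0) (sbr (q, \<lambda>_. 0) (r, \<lambda>_. 0))) (sbr (q, \<lambda>_. 0) (sbr (r, \<lambda>_. 0) (p, \<lambda>_. 0))))
      (sbr (r, \<lambda>_. 0) (sbr (p, \<lambda>_. 0) (q, \<lambda>_. 0))) = (\<lambda>_. 0, \<lambda>_. 0)"
  unfolding sbr_even sadd_def by (simp add: vderiv_const fun_eq_iff algebra_simps)

theorem proposition2p3:
  shows
   "(\<forall>\<phi>\<in>F1. \<forall>\<psi>\<in>F1. sbr \<phi> \<psi> \<in> F1)
    \<and> (\<forall>\<phi>\<in>F1. \<forall>\<psi>\<in>F1. sbr \<phi> \<psi> = sbr \<psi> \<phi>)
    \<and> (\<forall>\<phi>\<in>F1. \<forall>\<psi>\<in>F1. \<forall>\<theta>\<in>F1. sbr (sbr \<phi> \<psi>) \<theta> = sbr \<phi> (sbr \<psi> \<theta>))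
    \<and> (\<forall>\<psi>\<in>F1. \<forall>v\<in>F0. rho \<psi> v \<in> F0)
    \<and> (\<forall>\<phi>\<in>F1. \<forall>\<psi>\<in>F1. \<forall>v\<in>F0.
          sadd (rho \<phi> (rho \<psi> v)) (rho \<psi> (rho \<phi> v)) = rho (sbr \<phi> \<psi>) v)
    \<and> (\<forall>v\<in>F0. \<forall>w\<in>F0. sbr v w \<in> F1)
    \<and> (\<forall>v\<in>F0. \<forall>w\<in>F0. sbr v w = sscale (-1) (sbr w v))
    \<and> (\<forall>\<psi>\<in>F1. \<forall>v\<in>F0. \<forall>w\<in>F0.
          rho \<psi> (sbr v w) = sadd (sbr (rho \<psi> v) w) (sbr v (rho \<psi> w)))
    \<and> (\<forall>u\<in>F0. \<forall>v\<in>F0. \<forall>w\<in>F0.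
          sadd (sadd (sbr u (sbr v w)) (sbr v (sbr w u))) (sbr w (sbr u v))
            = (\<lambda>_. 0, \<lambda>_. 0))"
proof (intro conjI ballI)
  fix \<phi> \<psi> assume "\<phi> \<in> F1" "\<psi> \<in> F1"
  then show "sbr \<phi> \<psi> \<in> F1" by (auto elim!: F1E intro: p1)
next
  fix \<phi> \<psi> assume "\<phi> \<in> F1" "\<psi> \<in> F1"
  then show "sbr \<phi> \<psi> = sbr \<psi> \<phi>" by (auto elim!: F1E intro: p2)
next
  fix \<phi> \<psi> \<theta> assume "\<phi> \<in> F1" "\<psi> \<in> F1" "\<theta> \<in> F1"
  then show "sbr (sbr \<phi> \<psi>) \<theta> = sbr \<phi> (sbr \<psi> \<theta>)" by (auto elim!: F1E intro: p3)
next
  fix \<psi> v assume "\<psi> \<in> F1" "v \<in> F0"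
  then show "rho \<psi> v \<in> F0" by (auto elim!: F1E F0E intro: p4)
next
  fix \<phi> \<psi> v assume "\<phi> \<in> F1" "\<psi> \<in> F1" "v \<in> F0"
  then show "sadd (rho \<phi> (rho \<psi> v)) (rho \<psi> (rho \<phi> v)) = rho (sbr \<phi> \<psi>) v"
    by (auto elim!: F1E F0E intro: p5)
next
  fix v w assume "v \<in> F0" "w \<in> F0"
  then show "sbr v w \<in> F1" by (auto elim!: F0E intro: p6)
next
  fix v w assume "v \<in> F0" "w \<in> F0"
  then show "sbr v w = sscale (-1) (sbr w v)" by (auto elim!: F0E intro: p7)
next
  fix \<psi> v w assume "\<psi> \<in> F1" "v \<in> F0" "w \<in> F0"
  then show "rho \<psi> (sbr v w) = sadd (sbr (rho \<psi> v) w) (sbr v (rho \<psi> w))"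
    by (auto elim!: F1E F0E intro: p8)
next
  fix u v w assume "u \<in> F0" "v \<in> F0" "w \<in> F0"
  then show "sadd (sadd (sbr u (sbr v w)) (sbr v (sbr w u))) (sbr w (sbr u v)) = (\<lambda>_. 0, \<lambda>_. 0)"
    by (auto elim!: F0E intro: p9)
qed

end
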